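(* Let $M$ be a modular lattice of finite length with least element $0$ and greatest element $1$, and let $S(M)$ be its skeleton. Then (f) $S(M)=\{x\in M: x^{*+}=x\}$, and the maximal atomistic intervals of $M$ are exactly the intervals $[x,x^*]$ with $x\in S(M)$; (g) $S(M)$ is closed under the join $+$ of $M$, has least element $0$ and greatest element $1^+$, and with the order inherited from $M$ it is a lattice in which $x\vee y=x+y$ and $x\wedge y=(x\cdot y)^{*+}$.
   Context: $M$ is a modular lattice of finite length (every chain finite) with join $+$, meet $\cdot$. For $a\in M$: $a^*$ is the join of all elements covering $a$ if $a<1$, and $1^*=1$; $a^+$ is the meet of all elements covered by $a$ if $a>0$, and $0^+=0$; $a^{*+}$ means $(a^* )^+$. An interval $[a,b]$ is \emph{atomistic} if every element of it is a join of atoms of $[a,b]$ (elements covering $a$). The \emph{skeleton} $S(M)$ is the set of least elements of the maximal (under inclusion) atomistic intervals of $M$. *)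

theory Defs
  imports Main
begin

definition covers :: "'a::order \<Rightarrow> 'a \<Rightarrow> bool" where
  "covers a b \<longleftrightarrow> a < b \<and> \<not> (\<exists>c. a < c \<and> c < b)"

definition is_lub :: "'a::order set \<Rightarrow> 'a \<Rightarrow> bool" where
  "is_lub A u \<longleftrightarrow> (\<forall>s\<in>A. s \<le> u) \<and> (\<forall>v. (\<forall>s\<in>A. s \<le> v) \<longrightarrow> u \<le> v)"

definition is_glb :: "'a::order set \<Rightarrow> 'a \<Rightarrow> bool" where
  "is_glb A u \<longleftrightarrow> (\<forall>s\<in>A. u \<le> s) \<and> (\<forall>v. (\<forall>s\<in>A. v \<le> s) \<longrightarrow> v \<le> u)"

definition join_of :: "'a::order set \<Rightarrow> 'a" where
  "join_of A = (THE u. is_lub A u)"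

definition meet_of :: "'a::order set \<Rightarrow> 'a" where
  "meet_of A = (THE u. is_glb A u)"

definition upstar :: "'a::bounded_lattice \<Rightarrow> 'a" where
  "upstar a = (if a = top then top else join_of {b. covers a b})"

definition downplus :: "'a::bounded_lattice \<Rightarrow> 'a" where
  "downplus a = (if a = bot then bot else meet_of {b. covers b a})"

definition interval :: "'a::order \<Rightarrow> 'a \<Rightarrow> 'a set" where
  "interval a b = {x. a \<le> x \<and> x \<le> b}"

text \<open>[a,b] is atomistic: every element of it is the join (in [a,b]) of a set of
  atoms of [a,b]; the join in [a,b] of a set A of atoms is the join of insert a A
  (so the empty join is a).\<close>
definition atomistic :: "'a::order \<Rightarrow> 'a \<Rightarrow> bool" where
  "atomistic a b \<longleftrightarrow> a \<le> b \<and>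
     (\<forall>x\<in>interval a b. \<exists>A. A \<subseteq> {p. covers a p \<and> p \<le> b} \<and> is_lub (insert a A) x)"

definition max_atomistic :: "'a::order \<Rightarrow> 'a \<Rightarrow> bool" where
  "max_atomistic a b \<longleftrightarrow> atomistic a b \<and>
     \<not> (\<exists>c d. atomistic c d \<and> interval a b \<subset> interval c d)"

definition skeleton :: "'a::order set" where
  "skeleton = {a. \<exists>b. max_atomistic a b}"

definition modular :: "'a::lattice itself \<Rightarrow> bool" where
  "modular _ \<longleftrightarrow> (\<forall>x y z::'a. x \<le> z \<longrightarrow> sup x (inf y z) = inf (sup x y) z)"

definition finite_length :: "'a::order itself \<Rightarrow> bool" where
  "finite_length _ \<longleftrightarrow> (\<forall>C::'a set. Complete_Partial_Order.chain (\<le>) C \<longrightarrow> finite C)"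

end

theory Submission
  imports Defs
begin


locale mfl =
  fixes T :: "'a::bounded_lattice itself"
  assumes modl: "modular T" and fl: "finite_length T"
begin

lemma modlaw: "(x::'a) \<le> z \<Longrightarrow> sup x (inf y z) = inf (sup x y) z"
  using modl unfolding modular_def by blast

lemma chain_finite: "Complete_Partial_Order.chain (\<le>) (C::'a set) \<Longrightarrow> finite C"
  using fl unfolding finite_length_def by blast

lemma no_up: assumes "\<forall>i. f i < (f (Suc i)::'a)" shows False
proof -
  have sm: "strict_mono f" using assms by (simp add: strict_mono_Suc_iff)
  have "Complete_Partial_Order.chain (\<le>) (range f)"
    unfolding chain_def
  proof (intro ballI)
    fix x y assume "x \<in> range f" "y \<in> range f"
    then obtain i j where "x = f i" "y = f j" by auto
    then show "x \<le> y \<or> y \<le> x"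
      using sm strict_mono_less_eq[OF sm] by (metis nle_le)
  qed
  then have "finite (range f)" by (rule chain_finite)
  moreover have "inj f" using sm by (rule strict_mono_imp_inj_on)
  ultimately have "finite (UNIV::nat set)" using finite_imageD by blast
  then show False by simp
qed

lemma no_down_aux: "\<forall>i. f (Suc i) < (f i::'a) \<Longrightarrow> i < j \<Longrightarrow> f j < f i"
proof (induction j)
  case 0 then show ?case by simp
next
  case (Suc j)
  then show ?case by (metis less_Suc_eq order.strict_trans)
qed

lemma no_down: assumes "\<forall>i. f (Suc i) < (f i::'a)" shows False
proof -
  have d: "i < j \<Longrightarrow> f j < f i" for i j using no_down_aux[OF assms] .
  have "Complete_Partial_Order.chain (\<le>) (range f)"
    unfolding chain_def
  proof (intro ballI)
    fix x y assume "x \<in> range f" "y \<in> range f"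
    then obtain i j where "x = f i" "y = f j" by auto
    then show "x \<le> y \<or> y \<le> x"
      using d[of i j] d[of j i] by (cases i j rule: linorder_cases) auto
  qed
  then have "finite (range f)" by (rule chain_finite)
  moreover have "inj f" unfolding inj_def
    using d by (metis less_irrefl linorder_neqE_nat)
  ultimately have "finite (UNIV::nat set)" using finite_imageD by blast
  then show False by simp
qed

lemma wf_less: "wf {(x::'a, y). x < y}"
  unfolding wf_iff_no_infinite_down_chain using no_down by auto

lemma wf_greater: "wf {(x::'a, y). y < x}"
  unfolding wf_iff_no_infinite_down_chain using no_up by auto

lemma ex_max: "(x::'a) \<in> Q \<Longrightarrow> \<exists>m\<in>Q. \<forall>y\<in>Q. \<not> m < y"
  by (erule wfE_min[OF wf_greater]) auto

lemma ex_min: "(x::'a) \<in> Q \<Longrightarrow> \<exists>m\<in>Q. \<forall>y\<in>Q. \<not> y < m"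
  by (erule wfE_min[OF wf_less]) auto

lemma fin_lub: "finite B \<Longrightarrow> \<exists>x::'a. is_lub B x"
proof (induction B rule: finite_induct)
  case empty then show ?case by (auto simp: is_lub_def intro: exI[of _ bot])
next
  case (insert b B)
  then obtain x where "is_lub B x" by blast
  then have "is_lub (insert b B) (sup b x)" by (auto simp: is_lub_def intro: le_supI2)
  then show ?case by blast
qed

lemma fin_glb: "finite B \<Longrightarrow> \<exists>x::'a. is_glb B x"
proof (induction B rule: finite_induct)
  case empty then show ?case by (auto simp: is_glb_def intro: exI[of _ top])
next
  case (insert b B)
  then obtain x where "is_glb B x" by blast
  then have "is_glb (insert b B) (inf b x)" by (auto simp: is_glb_def intro: le_infI2)
  then show ?case by blast
qed

lemma ex_lub: "\<exists>u::'a. is_lub A u"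
proof -
  let ?K = "{x::'a. \<exists>B. finite B \<and> B \<subseteq> A \<and> is_lub B x}"
  have bK: "bot \<in> ?K" by (rule CollectI, rule exI[of _ "{}"]) (auto simp: is_lub_def)
  from ex_max[OF bK] obtain m where mK: "m \<in> ?K" and mx: "\<forall>y\<in>?K. \<not> m < y" by blast
  then obtain B where B: "finite B" "B \<subseteq> A" "is_lub B m" by blast
  have "is_lub A m" unfolding is_lub_def
  proof (intro conjI allI impI ballI)
    fix a assume a: "a \<in> A"
    obtain m' where m': "is_lub (insert a B) m'" using fin_lub B(1) by blast
    have "m' \<in> ?K" using B a m' by (intro CollectI exI[of _ "insert a B"]) auto
    moreover have "m \<le> m'" using B(3) m' unfolding is_lub_def by auto
    ultimately have "m = m'" using mx by (auto simp: order.order_iff_strict)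
    then show "a \<le> m" using m' by (auto simp: is_lub_def)
  next
    fix v assume "\<forall>s\<in>A. s \<le> v"
    then show "m \<le> v" using B unfolding is_lub_def by blast
  qed
  then show ?thesis by blast
qed

lemma ex_glb: "\<exists>u::'a. is_glb A u"
proof -
  let ?K = "{x::'a. \<exists>B. finite B \<and> B \<subseteq> A \<and> is_glb B x}"
  have tK: "top \<in> ?K" by (rule CollectI, rule exI[of _ "{}"]) (auto simp: is_glb_def)
  from ex_min[OF tK] obtain m where mK: "m \<in> ?K" and mx: "\<forall>y\<in>?K. \<not> y < m" by blast
  then obtain B where B: "finite B" "B \<subseteq> A" "is_glb B m" by blast
  have "is_glb A m" unfolding is_glb_def
  proof (intro conjI allI impI ballI)
    fix a assume a: "a \<in> A"
    obtain m' where m': "is_glb (insert a B) m'" using fin_glb B(1) by blast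
    have "m' \<in> ?K" using B a m' by (intro CollectI exI[of _ "insert a B"]) auto
    moreover have "m' \<le> m" using B(3) m' unfolding is_glb_def by auto
    ultimately have "m = m'" using mx by (auto simp: order.order_iff_strict)
    then show "m \<le> a" using m' by (auto simp: is_glb_def)
  next
    fix v assume "\<forall>s\<in>A. v \<le> s"
    then show "v \<le> m" using B unfolding is_glb_def by blast
  qed
  then show ?thesis by blast
qed

lemma lub_unique: "is_lub A u \<Longrightarrow> is_lub A v \<Longrightarrow> u = v"
  by (auto simp: is_lub_def intro: order.antisym)

lemma glb_unique: "is_glb A u \<Longrightarrow> is_glb A v \<Longrightarrow> u = v"
  by (auto simp: is_glb_def intro: order.antisym)

lemma join_of: "is_lub A (join_of (A::'a set))"
  unfolding join_of_def using ex_lub lub_unique by (metis theI)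

lemma meet_of: "is_glb A (meet_of (A::'a set))"
  unfolding meet_of_def using ex_glb glb_unique by (metis theI)

lemma ex_atom: assumes ay: "(a::'a) < y" shows "\<exists>p. covers a p \<and> p \<le> y"
proof -
  have "y \<in> {t. a < t \<and> t \<le> y}" using ay by auto
  from ex_min[OF this] obtain m where m1: "a < m" "m \<le> y" and m2: "\<forall>t\<in>{t. a < t \<and> t \<le> y}. \<not> t < m"
    by blast
  have "\<not> (\<exists>c. a < c \<and> c < m)"
  proof
    assume "\<exists>c. a < c \<and> c < m"
    then obtain c where c: "a < c" "c < m" by blast
    then have "c \<le> y" using m1 by (meson less_imp_le order_trans)
    then show False using m2 c by blast
  qed
  then have "covers a m" using m1 by (simp add: covers_def)
  then show ?thesis using m1 by blast
qed

lemma ex_coatom: assumes wu: "(w::'a) < u" shows "\<exists>z. covers z u \<and> w \<le> z"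
proof -
  have "w \<in> {t. w \<le> t \<and> t < u}" using wu by auto
  from ex_max[OF this] obtain m where m1: "w \<le> m" "m < u" and m2: "\<forall>t\<in>{t. w \<le> t \<and> t < u}. \<not> m < t"
    by blast
  have "\<not> (\<exists>c. m < c \<and> c < u)"
  proof
    assume "\<exists>c. m < c \<and> c < u"
    then obtain c where c: "m < c" "c < u" by blast
    then have "w \<le> c" using m1 by (meson less_imp_le order_trans)
    then show False using m2 c by blast
  qed
  then have "covers m u" using m1 by (simp add: covers_def)
  then show ?thesis using m1 by blast
qed

end



definition gen :: "'a::order \<Rightarrow> 'a \<Rightarrow> bool" where
  "gen a b \<longleftrightarrow> a \<le> b \<and> (\<forall>v. a \<le> v \<and> (\<forall>p. covers a p \<and> p \<le> b \<longrightarrow> p \<le> v) \<longrightarrow> b \<le> v)"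

context mfl
begin

lemma covers_le: "covers a b \<Longrightarrow> a \<le> b" unfolding covers_def by (auto intro: less_imp_le)

lemma covers_between: "covers a b \<Longrightarrow> a \<le> t \<Longrightarrow> t \<le> b \<Longrightarrow> t = a \<or> t = b"
  unfolding covers_def by (metis order.order_iff_strict)

lemma L1:
  assumes c: "covers c p" and cz: "c \<le> (z::'a)" and pz: "\<not> p \<le> z"
  shows "covers z (sup z p)"
  unfolding covers_def
proof (intro conjI notI)
  show "z < sup z p" using pz by (metis le_sup_iff order.not_eq_order_implies_strict sup_ge1)
next
  assume "\<exists>w. z < w \<and> w < sup z p"
  then obtain w where w: "z < w" "w < sup z p" by blast
  have eq: "sup z (inf p w) = w"
    using modlaw[of z w p] w by (simp add: inf.absorb2 less_imp_le)
  have "c \<le> inf p w" using c cz w by (meson covers_le le_inf_iff less_imp_le order_trans)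
  then have "inf p w = c \<or> inf p w = p" using covers_between[OF c] by simp
  then show False
  proof
    assume "inf p w = c" then have "w = z" using eq cz by (simp add: sup.absorb1)
    then show False using w by simp
  next
    assume "inf p w = p" then have "p \<le> w" by (metis inf.cobounded2)
    then show False using w by (meson le_sup_iff less_imp_le not_le_imp_less order.strict_iff_not)
  qed
qed

lemma L1':
  assumes c: "covers z u" and wu: "w \<le> (u::'a)" and wz: "\<not> w \<le> z"
  shows "covers (inf w z) w"
  unfolding covers_def
proof (intro conjI notI)
  show "inf w z < w" using wz by (metis inf.cobounded1 inf.cobounded2 order.not_eq_order_implies_strict)
next
  assume "\<exists>v. inf w z < v \<and> v < w"
  then obtain v where v: "inf w z < v" "v < w" by blast
  have eq: "inf (sup v z) w = v"
    using modlaw[of v w z] v by (metis inf_commute less_imp_le sup.absorb1)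
  have "z \<le> sup v z" "sup v z \<le> u" using v wu c covers_le by (auto intro: order_trans less_imp_le)
  then have "sup v z = z \<or> sup v z = u" using covers_between[OF c] by auto
  then show False
  proof
    assume "sup v z = z" then have "v \<le> inf w z" using v
      by (metis inf.orderI inf_le2 le_inf_iff less_imp_le sup.absorb_iff2)
    then show False using v(1) by (meson leD)
  next
    assume "sup v z = u" then have "v = w" using eq wu by (simp add: inf.absorb2)
    then show False using v by simp
  qed
qed

lemma U: "is_lub (insert x {p. covers x p}) (upstar (x::'a))"
proof (cases "x = top")
  case True
  then have "{p. covers x p} = {}" by (auto simp: covers_def)
  then show ?thesis using True by (simp add: upstar_def is_lub_def)
next
  case False
  then have ne: "x < top" using top.not_eq_extremum by blast
  from ex_atom[OF this] obtain p0 where p0: "covers x p0" by blast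
  have "is_lub {p. covers x p} (join_of {p. covers x p})" by (rule join_of)
  then show ?thesis using False p0 unfolding upstar_def is_lub_def
    by (auto intro: order_trans covers_le)
qed

lemma Dn: "is_glb (insert u {z. covers z u}) (downplus (u::'a))"
proof (cases "u = bot")
  case True
  then have "{z. covers z u} = {}" by (auto simp: covers_def)
  then show ?thesis using True by (simp add: downplus_def is_glb_def)
next
  case False
  then have ne: "bot < u" using bot.not_eq_extremum by blast
  from ex_coatom[OF this] obtain z0 where z0: "covers z0 u" by blast
  have "is_glb {z. covers z u} (meet_of {z. covers z u})" by (rule meet_of)
  then show ?thesis using False z0 unfolding downplus_def is_glb_def
    by (auto intro: order_trans covers_le)
qed

lemma up_ge: "x \<le> upstar (x::'a)" using U by (simp add: is_lub_def)
lemma up_atom: "covers x p \<Longrightarrow> p \<le> upstar (x::'a)" using U by (simp add: is_lub_def)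
lemma up_least: "x \<le> v \<Longrightarrow> (\<And>p. covers x p \<Longrightarrow> p \<le> v) \<Longrightarrow> upstar (x::'a) \<le> v"
  using U by (simp add: is_lub_def)
lemma dp_le: "downplus u \<le> (u::'a)" using Dn by (simp add: is_glb_def)
lemma dp_coat: "covers z u \<Longrightarrow> downplus (u::'a) \<le> z" using Dn by (simp add: is_glb_def)
lemma dp_greatest: "v \<le> u \<Longrightarrow> (\<And>z. covers z u \<Longrightarrow> v \<le> z) \<Longrightarrow> v \<le> downplus (u::'a)"
  using Dn by (simp add: is_glb_def)

lemma up_mono: assumes "x \<le> (s::'a)" shows "upstar x \<le> upstar s"
proof (rule up_least)
  show "x \<le> upstar s" using assms up_ge order_trans by blast
next
  fix p assume p: "covers x p"
  show "p \<le> upstar s"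
  proof (cases "p \<le> s")
    case True then show ?thesis using up_ge order_trans by blast
  next
    case False
    then have "covers s (sup s p)" using L1[OF p assms] by simp
    then have "sup s p \<le> upstar s" by (rule up_atom)
    then show ?thesis by simp
  qed
qed

end



context mfl
begin

lemma coreC:
  assumes g: "gen a b" and ax': "a \<le> x'" and x'x: "x' \<le> (x::'a)" and xb: "x \<le> b"
    and at: "\<forall>p. covers a p \<and> p \<le> x \<longrightarrow> p \<le> x'"
  shows "x \<le> x'"
proof -
  let ?Q = "{c. a \<le> c \<and> c \<le> b \<and> inf x' c \<le> a}"
  have ab: "a \<le> b" using g by (simp add: gen_def)
  have "a \<in> ?Q" using ab by auto
  from ex_max[OF this] obtain c where cQ: "c \<in> ?Q" and cmax: "\<forall>y\<in>?Q. \<not> c < y" by blast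
  have ac: "a \<le> c" "c \<le> b" "inf x' c \<le> a" using cQ by auto
  have bs: "b \<le> sup x' c"
  proof -
    have "\<forall>p. covers a p \<and> p \<le> b \<longrightarrow> p \<le> sup x' c"
    proof (intro allI impI)
      fix q assume q: "covers a q \<and> q \<le> b"
      show "q \<le> sup x' c"
      proof (rule ccontr)
        assume nq: "\<not> q \<le> sup x' c"
        have "a \<le> inf (sup x' c) q" using ac q covers_le by (auto intro: le_supI2)
        then have "inf (sup x' c) q = a \<or> inf (sup x' c) q = q"
          using covers_between[of a q "inf (sup x' c) q"] q by simp
        then have m1: "inf (sup x' c) q = a" using nq by (metis inf.absorb_iff2 inf_commute)
        have m2: "sup c (inf q (sup x' c)) = inf (sup c q) (sup x' c)"
          using modlaw[of c "sup x' c" q] by simp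
        have "inf q (sup x' c) = a" using m1 by (simp add: inf_commute)
        then have m3: "inf (sup c q) (sup x' c) = c" using m2 ac by (simp add: sup.absorb1)
        have "inf x' (sup c q) \<le> inf (sup c q) (sup x' c)" by (simp add: le_infI1 le_infI2)
        then have "inf x' (sup c q) \<le> inf x' c" using m3 by simp
        then have "inf x' (sup c q) \<le> a" using ac order_trans by blast
        moreover have "a \<le> sup c q" "sup c q \<le> b" using ac q by (auto intro: le_supI1)
        ultimately have "sup c q \<in> ?Q" by auto
        moreover have "c < sup c q" using nq
          by (metis le_supI2 sup.cobounded1 sup.order_iff order.not_eq_order_implies_strict)
        ultimately show False using cmax by blast
      qed
    qed
    moreover have "a \<le> sup x' c" using ax' by (simp add: le_supI1)
    ultimately show ?thesis using g by (simp add: gen_def)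
  qed
  have xeq: "sup x' (inf c x) = x"
    using modlaw[of x' x c] x'x xb bs by (metis inf.absorb2 order_trans)
  have cx: "inf c x \<le> a"
  proof (rule ccontr)
    assume n: "\<not> inf c x \<le> a"
    have "a \<le> inf c x" using ac ax' x'x by (auto intro: order_trans)
    then have "a < inf c x" using n by (simp add: order.not_eq_order_implies_strict order.eq_iff)
    from ex_atom[OF this] obtain q where q: "covers a q" "q \<le> inf c x" by blast
    then have "q \<le> x'" using at by auto
    moreover have "q \<le> c" using q by simp
    ultimately have "q \<le> a" using ac(3) by (meson le_inf_iff order_trans)
    then show False using q(1) unfolding covers_def by (meson leD)
  qed
  show "x \<le> x'" using xeq cx ax' by (metis le_supI order_refl sup.coboundedI2 sup.order_iff)
qed

lemma gen_atomistic: assumes g: "gen a (b::'a)" shows "atomistic a b"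
  unfolding atomistic_def interval_def
proof (intro conjI ballI)
  show "a \<le> b" using g by (simp add: gen_def)
next
  fix x assume "x \<in> {x. a \<le> x \<and> x \<le> b}"
  then have x: "a \<le> x" "x \<le> b" by auto
  let ?A = "{p. covers a p \<and> p \<le> x}"
  have "?A \<subseteq> {p. covers a p \<and> p \<le> b}" using x by auto
  moreover have "is_lub (insert a ?A) x"
    unfolding is_lub_def
  proof (intro conjI allI impI ballI)
    fix s assume "s \<in> insert a ?A" then show "s \<le> x" using x by auto
  next
    fix v assume v: "\<forall>s\<in>insert a ?A. s \<le> v"
    have "x \<le> inf x v"
      by (rule coreC[OF g]) (use x v in auto)
    then show "x \<le> v" by simp
  qed
  ultimately show "\<exists>A. A \<subseteq> {p. covers a p \<and> p \<le> b} \<and> is_lub (insert a A) x" by blast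
qed

lemma atomistic_gen: assumes at: "atomistic a (b::'a)" shows "gen a b"
proof -
  have ab: "a \<le> b" using at by (simp add: atomistic_def)
  then obtain A where A: "A \<subseteq> {p. covers a p \<and> p \<le> b}" "is_lub (insert a A) b"
    using at unfolding atomistic_def interval_def by auto
  show ?thesis unfolding gen_def
  proof (intro conjI allI impI)
    show "a \<le> b" by (rule ab)
  next
    fix v assume "a \<le> v \<and> (\<forall>p. covers a p \<and> p \<le> b \<longrightarrow> p \<le> v)"
    then show "b \<le> v" using A unfolding is_lub_def by blast
  qed
qed

lemma gen_up: "gen a (upstar (a::'a))"
  unfolding gen_def using up_ge up_atom up_least by blast

lemma gen_le_up: "gen a (b::'a) \<Longrightarrow> b \<le> upstar a"
  unfolding gen_def using up_ge up_atom by blast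

lemma gen_sub: assumes g: "gen c (d::'a)" and ca: "c \<le> a" and ad: "a \<le> d" shows "gen a d"
  unfolding gen_def
proof (intro conjI allI impI)
  show "a \<le> d" by (rule ad)
next
  fix v assume "a \<le> v \<and> (\<forall>p. covers a p \<and> p \<le> d \<longrightarrow> p \<le> v)"
  then have av: "a \<le> v" and H: "\<And>p. covers a p \<Longrightarrow> p \<le> d \<Longrightarrow> p \<le> v" by auto
  have "\<forall>p. covers c p \<and> p \<le> d \<longrightarrow> p \<le> v"
  proof (intro allI impI)
    fix p assume p: "covers c p \<and> p \<le> d"
    show "p \<le> v"
    proof (cases "p \<le> a")
      case True then show ?thesis using av by simp
    next
      case False
      then have "covers a (sup a p)" using L1 p ca by blast
      moreover have "sup a p \<le> d" using p ad by simp
      ultimately have "sup a p \<le> v" using H by blast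
      then show ?thesis by simp
    qed
  qed
  moreover have "c \<le> v" using ca av by simp
  ultimately show "d \<le> v" using g by (simp add: gen_def)
qed

lemma exE_coat:
  assumes g: "gen a (u::'a)" and p: "covers a p" and pu: "p \<le> u"
  shows "\<exists>z. covers z u \<and> a \<le> z \<and> \<not> p \<le> z"
proof -
  let ?Q = "{w. a \<le> w \<and> w \<le> u \<and> \<not> p \<le> w}"
  have au: "a \<le> u" using g by (simp add: gen_def)
  have "\<not> p \<le> a" using p unfolding covers_def by (meson leD)
  then have "a \<in> ?Q" using au by auto
  from ex_max[OF this] obtain z where zQ: "z \<in> ?Q" and zmax: "\<forall>y\<in>?Q. \<not> z < y" by blast
  have z: "a \<le> z" "z \<le> u" "\<not> p \<le> z" using zQ by auto
  have czp: "covers z (sup z p)" using L1[OF p z(1) z(3)] .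
  have zpu: "sup z p \<le> u" using z pu by simp
  show ?thesis
  proof (cases "sup z p = u")
    case True then show ?thesis using czp z by auto
  next
    case False
    then have "\<not> u \<le> sup z p" using zpu by (meson order.antisym)
    moreover have "a \<le> sup z p" using z by (simp add: le_supI1)
    ultimately obtain q where q: "covers a q" "q \<le> u" "\<not> q \<le> sup z p"
      using g unfolding gen_def by blast
    have nqz: "\<not> q \<le> z" using q(3) by (meson le_supI1)
    have czq: "covers z (sup z q)" using L1[OF q(1) z(1) nqz] .
    have "sup z q \<notin> ?Q"
    proof
      assume "sup z q \<in> ?Q"
      moreover have "z < sup z q" using czq by (simp add: covers_def)
      ultimately show False using zmax by blast
    qed
    moreover have "a \<le> sup z q" "sup z q \<le> u" using z q by (auto intro: le_supI1)
    ultimately have "p \<le> sup z q" by auto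
    then have "sup z p \<le> sup z q" by simp
    moreover have "z \<le> sup z p" by simp
    ultimately have "sup z p = z \<or> sup z p = sup z q" using covers_between[OF czq] by blast
    then have "sup z p = sup z q" using czp unfolding covers_def by (metis less_irrefl)
    then have "q \<le> sup z p" by simp
    then show ?thesis using q(3) by simp
  qed
qed

lemma dp_le_gen: assumes g: "gen a (u::'a)" shows "downplus u \<le> a"
proof (rule ccontr)
  assume n: "\<not> downplus u \<le> a"
  let ?t = "sup (downplus u) a"
  have au: "a \<le> u" using g by (simp add: gen_def)
  have tu: "?t \<le> u" using au dp_le by simp
  have "a < ?t" using n by (metis sup.cobounded2 sup.orderI sup_commute order.not_eq_order_implies_strict)
  from ex_atom[OF this] obtain p where p: "covers a p" "p \<le> ?t" by blast
  then obtain z where z: "covers z u" "a \<le> z" "\<not> p \<le> z" using exE_coat[OF g p(1)] tu by (meson order_trans)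
  have "downplus u \<le> z" using dp_coat z(1) .
  then have "?t \<le> z" using z(2) by simp
  then show False using p z by (meson order_trans)
qed

lemma gen_dp: "gen (downplus u) (u::'a)"
  unfolding gen_def
proof (intro conjI allI impI)
  show "downplus u \<le> u" by (rule dp_le)
next
  fix v assume "downplus u \<le> v \<and> (\<forall>p. covers (downplus u) p \<and> p \<le> u \<longrightarrow> p \<le> v)"
  then have H: "\<And>p. covers (downplus u) p \<Longrightarrow> p \<le> u \<Longrightarrow> p \<le> v" by auto
  show "u \<le> v"
  proof (rule ccontr)
    assume nuv: "\<not> u \<le> v"
    have "inf v u < u" using nuv by (metis inf.absorb_iff2 inf.cobounded2 inf_commute order.not_eq_order_implies_strict)
    from ex_coatom[OF this] obtain z where z: "covers z u" "inf v u \<le> z" by blast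
    have az: "downplus u \<le> z" using dp_coat z(1) .
    let ?P = "{t. downplus u \<le> t \<and> t \<le> u \<and> \<not> t \<le> z}"
    have "u \<in> ?P" using z(1) dp_le by (auto simp: covers_def)
    from ex_min[OF this] obtain p where pP: "p \<in> ?P" and pmin: "\<forall>y\<in>?P. \<not> y < p" by blast
    have pp: "downplus u \<le> p" "p \<le> u" "\<not> p \<le> z" using pP by auto
    have cpz: "covers (inf p z) p" using L1'[OF z(1) pp(2) pp(3)] .
    have pz_le: "inf p z \<le> downplus u"
    proof (rule ccontr)
      assume nn: "\<not> inf p z \<le> downplus u"
      have "inf p z \<le> u" using pp by (simp add: le_infI1)
      then obtain q where q: "covers q u" "\<not> inf p z \<le> q"
        using nn dp_greatest by blast
      have npq: "\<not> p \<le> q" using q(2) by (meson inf.coboundedI1)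
      have cpq: "covers (inf p q) p" using L1'[OF q(1) pp(2) npq] .
      have "downplus u \<le> inf p q" using pp dp_coat[OF q(1)] by simp
      moreover have "inf p q \<le> u" using pp by (simp add: le_infI1)
      moreover have "inf p q < p" using cpq by (simp add: covers_def)
      ultimately have "inf p q \<le> z" using pmin by blast
      then have "inf p q \<le> inf p z" by simp
      moreover have "inf p z \<le> p" by simp
      ultimately have "inf p z = inf p q \<or> inf p z = p" using covers_between[OF cpq] by blast
      then show False using q(2) pp(3) by (metis inf.absorb_iff1 inf.cobounded2)
    qed
    have "downplus u \<le> inf p z" using pp az by simp
    then have "inf p z = downplus u" using pz_le by (auto intro: order.antisym)
    then have "covers (downplus u) p" using cpz by simp
    then have "p \<le> v" using H pp by blast
    then have "p \<le> inf v u" using pp by simp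
    then show False using z(2) pp(3) by (meson order_trans)
  qed
qed

lemma Dprime:
  assumes fx: "downplus (upstar x) = (x::'a)" and cz: "covers z u" and xu: "upstar x \<le> u"
  shows "x \<le> z"
proof (rule ccontr)
  assume nxz: "\<not> x \<le> z"
  let ?d = "inf x z"
  have xu': "x \<le> u" using xu up_ge order_trans by blast
  have cdx: "covers ?d x" using L1'[OF cz xu' nxz] .
  have g: "gen ?d (upstar x)"
    unfolding gen_def
  proof (intro conjI allI impI)
    show "?d \<le> upstar x" using up_ge by (meson inf.coboundedI1)
  next
    fix v assume "?d \<le> v \<and> (\<forall>p. covers ?d p \<and> p \<le> upstar x \<longrightarrow> p \<le> v)"
    then have H: "\<And>p. covers ?d p \<Longrightarrow> p \<le> upstar x \<Longrightarrow> p \<le> v" by auto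
    have xv: "x \<le> v" using H[OF cdx up_ge] .
    show "upstar x \<le> v"
    proof (rule up_least[OF xv])
      fix p assume cxp: "covers x p"
      have pu: "p \<le> upstar x" using up_atom cxp .
      have pu': "p \<le> u" using pu xu by simp
      have xp: "x \<le> p" using cxp covers_le by blast
      have npz: "\<not> p \<le> z" using xp nxz by (meson order_trans)
      let ?q = "inf p z"
      have cqp: "covers ?q p" using L1'[OF cz pu' npz] .
      have dq: "?d \<le> ?q" using xp by (simp add: inf.coboundedI1 le_infI1)
      have xq: "\<not> x \<le> ?q" using nxz by simp
      have cq: "covers ?q (sup ?q x)" using L1[OF cdx dq xq] .
      have "sup ?q x \<le> p" using xp by simp
      moreover have "?q \<le> sup ?q x" by simp
      ultimately have "sup ?q x = ?q \<or> sup ?q x = p" using covers_between[OF cqp] by blast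
      then have qx: "sup ?q x = p" using cq unfolding covers_def by (metis less_irrefl)
      have cdq: "covers ?d ?q"
        unfolding covers_def
      proof (intro conjI notI)
        show "?d < ?q"
        proof -
          have "?d \<noteq> ?q"
          proof
            assume e: "?d = ?q"
            have "?d < x" "x < p" using cdx cxp by (auto simp: covers_def)
            then show False using cqp e by (auto simp: covers_def)
          qed
          then show ?thesis using dq by (simp add: order.not_eq_order_implies_strict)
        qed
      next
        assume "\<exists>w. ?d < w \<and> w < ?q"
        then obtain w where w: "?d < w" "w < ?q" by blast
        have wz: "w \<le> z" using w by (meson inf.boundedE less_imp_le order_trans)
        have e1: "inf (sup w x) z = w"
          using modlaw[of w z x] wz w by (metis inf_commute less_imp_le sup.absorb1)
        have "sup w x \<le> sup ?q x" using less_imp_le[OF w(2)] by (simp add: le_supI1)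
        then have wxp: "sup w x \<le> p" using qx by simp
        have "sup w x \<noteq> p" using e1 w by auto
        moreover have "x \<noteq> sup w x"
        proof
          assume "x = sup w x"
          then have "w \<le> x" by (metis sup.cobounded1 sup_commute)
          then have "w \<le> ?d" using wz by simp
          then show False using w(1) by (meson leD)
        qed
        ultimately have "x < sup w x" "sup w x < p"
          using wxp by (auto simp: order.not_eq_order_implies_strict)
        then show False using cxp unfolding covers_def by blast
      qed
      have "?q \<le> v" using H[OF cdq] pu by (meson inf.coboundedI1 order_trans)
      then show "p \<le> v" using qx xv by (metis le_supI)
    qed
  qed
  have "downplus (upstar x) \<le> ?d" using dp_le_gen[OF g] .
  then have "x \<le> z" using fx by simp
  then show False using nxz by simp
qed

end



context mfl
begin

lemma P1: "downplus (upstar x) \<le> (x::'a)" using dp_le_gen[OF gen_up] .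

lemma P2: "downplus (upstar (downplus (upstar x))) = downplus (upstar (x::'a))"
proof -
  let ?a' = "downplus (upstar x)"
  have "upstar x \<le> upstar ?a'" using gen_le_up[OF gen_dp] .
  moreover have "gen x (upstar ?a')"
    using gen_sub[OF gen_up[of ?a'] P1] up_ge order_trans \<open>upstar x \<le> upstar ?a'\<close> by blast
  then have "upstar ?a' \<le> upstar x" using gen_le_up by blast
  ultimately show ?thesis by simp
qed

lemma max_char: "max_atomistic a b \<longleftrightarrow> downplus (upstar a) = a \<and> b = upstar (a::'a)"
proof
  assume m: "max_atomistic a b"
  then have at: "atomistic a b" and nm: "\<not> (\<exists>c d. atomistic c d \<and> interval a b \<subset> interval c d)"
    by (auto simp: max_atomistic_def)
  have ab: "a \<le> b" using at by (simp add: atomistic_def)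
  have bu: "b \<le> upstar a" using gen_le_up[OF atomistic_gen[OF at]] .
  have atu: "atomistic a (upstar a)" using gen_atomistic[OF gen_up] .
  have "interval a b \<subseteq> interval a (upstar a)" using bu by (auto simp: interval_def)
  then have "interval a b = interval a (upstar a)" using nm atu by blast
  then have "upstar a \<in> interval a b" using up_ge by (auto simp: interval_def)
  then have b: "b = upstar a" using bu by (simp add: interval_def)
  have atd: "atomistic (downplus (upstar a)) (upstar a)" using gen_atomistic[OF gen_dp] .
  have "interval a (upstar a) \<subseteq> interval (downplus (upstar a)) (upstar a)"
    using P1 by (auto simp: interval_def intro: order_trans)
  then have "interval a (upstar a) = interval (downplus (upstar a)) (upstar a)"
    using nm atd b by blast
  moreover have "downplus (upstar a) \<in> interval (downplus (upstar a)) (upstar a)"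
    using dp_le by (simp add: interval_def)
  ultimately have "downplus (upstar a) \<in> interval a (upstar a)" by simp
  then have "a \<le> downplus (upstar a)" by (simp add: interval_def)
  then show "downplus (upstar a) = a \<and> b = upstar a" using P1 b by (simp add: order.antisym)
next
  assume h: "downplus (upstar a) = a \<and> b = upstar a"
  have atu: "atomistic a (upstar a)" using gen_atomistic[OF gen_up] .
  have "\<not> (\<exists>c d. atomistic c d \<and> interval a (upstar a) \<subset> interval c d)"
  proof
    assume "\<exists>c d. atomistic c d \<and> interval a (upstar a) \<subset> interval c d"
    then obtain c d where cd: "atomistic c d" "interval a (upstar a) \<subset> interval c d" by blast
    have "a \<in> interval c d" "upstar a \<in> interval c d" using cd(2) up_ge by (auto simp: interval_def)
    then have ca: "c \<le> a" "a \<le> d" "upstar a \<le> d" by (auto simp: interval_def)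
    have gcd: "gen c d" using atomistic_gen[OF cd(1)] .
    have "d \<le> upstar a" using gen_le_up[OF gen_sub[OF gcd ca(1) ca(2)]] .
    then have d: "d = upstar a" using ca by simp
    have "downplus (upstar a) \<le> c" using dp_le_gen gcd d by blast
    then have "c = a" using h ca by simp
    then show False using cd(2) d by simp
  qed
  then show "max_atomistic a b" using atu h by (simp add: max_atomistic_def)
qed

lemma skel: "skeleton = {x::'a. downplus (upstar x) = x}"
  unfolding skeleton_def using max_char by auto

lemma g1: assumes x: "downplus (upstar x) = x" and y: "downplus (upstar y) = (y::'a)"
  shows "downplus (upstar (sup x y)) = sup x y"
proof -
  let ?s = "sup x y"
  have "x \<le> downplus (upstar ?s)"
  proof (rule dp_greatest)
    show "x \<le> upstar ?s" using up_ge by (meson le_supE)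
    fix z :: 'a assume "covers z (upstar ?s)"
    then show "x \<le> z" using Dprime[OF x] up_mono by simp
  qed
  moreover have "y \<le> downplus (upstar ?s)"
  proof (rule dp_greatest)
    show "y \<le> upstar ?s" using up_ge by (meson le_supE)
    fix z :: 'a assume "covers z (upstar ?s)"
    then show "y \<le> z" using Dprime[OF y] up_mono by simp
  qed
  ultimately show ?thesis using P1 by (simp add: order.antisym)
qed

lemma g3: "downplus (upstar (downplus top)) = downplus (top::'a)"
proof -
  have "top \<le> upstar (downplus (top::'a))" using gen_le_up[OF gen_dp] .
  then show ?thesis by (simp add: top.extremum_unique)
qed

lemma g4: assumes x: "downplus (upstar x) = (x::'a)" shows "x \<le> downplus top"
proof (rule dp_greatest)
  show "x \<le> top" by simp
  fix z :: 'a assume "covers z top"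
  then show "x \<le> z" using Dprime[OF x] by simp
qed

lemma g6: assumes z: "downplus (upstar z) = (z::'a)"
  shows "(z \<le> x \<and> z \<le> y) \<longleftrightarrow> z \<le> downplus (upstar (inf x y))"
proof
  assume "z \<le> x \<and> z \<le> y"
  then have zw: "z \<le> inf x y" by simp
  show "z \<le> downplus (upstar (inf x y))"
  proof (rule dp_greatest)
    show "z \<le> upstar (inf x y)" using zw up_ge order_trans by blast
    fix c :: 'a assume "covers c (upstar (inf x y))"
    then show "z \<le> c" using Dprime[OF z] up_mono[OF zw] by simp
  qed
next
  assume "z \<le> downplus (upstar (inf x y))"
  then have "z \<le> inf x y" using P1 order_trans by blast
  then show "z \<le> x \<and> z \<le> y" by simp
qed

end


theorem theorem6p2:
  assumes "modular TYPE('a::bounded_lattice)"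
    and "finite_length TYPE('a)"
  shows "(skeleton = {x::'a. downplus (upstar x) = x} \<and>
          (\<forall>a b::'a. max_atomistic a b \<longleftrightarrow> a \<in> skeleton \<and> b = upstar a))
       \<and> ((\<forall>x\<in>skeleton. \<forall>y\<in>skeleton. sup x y \<in> (skeleton::'a set)) \<and>
          bot \<in> (skeleton::'a set) \<and> downplus (top::'a) \<in> skeleton \<and>
          (\<forall>x\<in>skeleton. bot \<le> x \<and> x \<le> downplus (top::'a)) \<and>
          (\<forall>x\<in>skeleton. \<forall>y\<in>skeleton.
              (\<forall>z\<in>skeleton. (x \<le> z \<and> y \<le> z) \<longleftrightarrow> sup x y \<le> z) \<and>
              downplus (upstar (inf x y)) \<in> (skeleton::'a set) \<and>
              (\<forall>z\<in>skeleton. (z \<le> x \<and> z \<le> y) \<longleftrightarrow> z \<le> downplus (upstar (inf x y)))))"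
proof -
  interpret mfl "TYPE('a)" using assms by unfold_locales
  have b: "downplus (upstar (bot::'a)) = bot" using P1[of bot] by (simp add: bot_unique)
  have S: "skeleton = {x::'a. downplus (upstar x) = x}" by (rule skel)
  show ?thesis
    unfolding S
  proof (intro conjI ballI allI)
    show "{x::'a. downplus (upstar x) = x} = {x. downplus (upstar x) = x}" by simp
  next
    fix a b :: 'a show "max_atomistic a b \<longleftrightarrow> a \<in> {x. downplus (upstar x) = x} \<and> b = upstar a"
      using max_char by simp
  next
    fix x y :: 'a assume "x \<in> {x. downplus (upstar x) = x}" "y \<in> {x. downplus (upstar x) = x}"
    then show "sup x y \<in> {x. downplus (upstar x) = x}" using g1 by simp
  next
    show "(bot::'a) \<in> {x. downplus (upstar x) = x}" using b by simp
  next
    show "downplus (top::'a) \<in> {x. downplus (upstar x) = x}" using g3 by simp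
  next
    fix x :: 'a show "bot \<le> x" by simp
  next
    fix x :: 'a assume "x \<in> {x. downplus (upstar x) = x}"
    then show "x \<le> downplus top" using g4 by simp
  next
    fix x y z :: 'a
    show "(x \<le> z \<and> y \<le> z) \<longleftrightarrow> sup x y \<le> z" by simp
  next
    fix x y :: 'a
    show "downplus (upstar (inf x y)) \<in> {x. downplus (upstar x) = x}" using P2 by simp
  next
    fix x y z :: 'a assume "z \<in> {x. downplus (upstar x) = x}"
    then show "(z \<le> x \<and> z \<le> y) \<longleftrightarrow> z \<le> downplus (upstar (inf x y))" using g6 by simp
  qed
qed

end
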